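(* Let $T_1^f$ and $T_2^g$ be merge trees with node sets $V(T_1)$ and $V(T_2)$. Let $\Lambda_1 = \{|f(u)-g(w)| : u\in V(T_1), w \in V(T_2)\}$, $\Lambda_2 = \{|f(u)-f(u')|/2 : u,u' \in V(T_1)\}$, $\Lambda_3 = \{|g(w)-g(w')|/2 : w,w'\in V(T_2)\}$ and $\Lambda = \Lambda_1\cup\Lambda_2\cup\Lambda_3$. Then $d_I(T_1^f, T_2^g) \in \Lambda$.
   Context: A merge tree $T^h$ is a finite rooted tree $T$ with a continuous function $h: |T| \to \mathbb{R}$ on its underlying space (interior points of edges included) that is decreasing along every root-to-leaf path, modified by attaching to the root a ray upward along which $h$ increases to $+\infty$; $V(T)$ denotes the set of tree nodes (vertices of $T$). $u^{\varepsilon}$ is the unique ancestor of $u$ with $h(u^\varepsilon) - h(u) = \varepsilon$. For merge trees $T_1^f$, $T_2^g$, a pair of continuous maps $\alpha: |T_1| \to |T_2|$, $\beta: |T_2| \to |T_1|$ is $\varepsilon$-compatible if $g(\alpha(u)) = f(u)+\varepsilon$, $\beta(\alpha(u)) = u^{2\varepsilon}$ for all $u\in|T_1|$ and $f(\beta(w)) = g(w)+\varepsilon$, $\alpha(\beta(w)) = w^{2\varepsilon}$ for all $w \in |T_2|$; the interleaving distance $d_I(T_1^f,T_2^g)$ is the infimum of $\varepsilon$ for which such a pair exists. *)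

theory Defs
  imports Complex_Main
begin

text \<open>The underlying space
is realised as pairs (v, t): the point at height t on the edge from v up to
its parent (for the root: on the ray to +infinity).  The height function
of a point is its second component.\<close>

record 'a mtree =
  nodes :: "'a set"
  par   :: "'a \<Rightarrow> 'a"
  root  :: "'a"
  ht    :: "'a \<Rightarrow> real"

definition merge_tree :: "'a mtree \<Rightarrow> bool" where
  "merge_tree T \<longleftrightarrow> finite (nodes T) \<and> root T \<in> nodes T \<and>
     (\<forall>v \<in> nodes T - {root T}. par T v \<in> nodes T \<and> ht T v < ht T (par T v))"

definition node_anc :: "'a mtree \<Rightarrow> 'a \<Rightarrow> 'a \<Rightarrow> bool" where
  "node_anc T v w \<longleftrightarrow>
     (\<exists>k. w = (par T ^^ k) v \<and> (\<forall>i<k. (par T ^^ i) v \<noteq> root T))"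

definition pts :: "'a mtree \<Rightarrow> ('a \<times> real) set" where
  "pts T = {(v, t). v \<in> nodes T \<and> ht T v \<le> t \<and> (v \<noteq> root T \<longrightarrow> t < ht T (par T v))}"

definition pt_anc :: "'a mtree \<Rightarrow> 'a \<times> real \<Rightarrow> 'a \<times> real \<Rightarrow> bool" where
  "pt_anc T p q \<longleftrightarrow> node_anc T (fst p) (fst q) \<and> snd p \<le> snd q"

definition up :: "'a mtree \<Rightarrow> 'a \<times> real \<Rightarrow> real \<Rightarrow> 'a \<times> real" where
  "up T u e = (THE w. w \<in> pts T \<and> pt_anc T u w \<and> snd w - snd u = e)"

text \<open>Path metric on |T| (edge lengths = height differences); it induces the
topology of the geometric realisation.\<close>
definition merge_ht :: "'a mtree \<Rightarrow> 'a \<times> real \<Rightarrow> 'a \<times> real \<Rightarrow> real" where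
  "merge_ht T p q = Inf {snd w | w. w \<in> pts T \<and> pt_anc T p w \<and> pt_anc T q w}"

definition tdist :: "'a mtree \<Rightarrow> 'a \<times> real \<Rightarrow> 'a \<times> real \<Rightarrow> real" where
  "tdist T p q = 2 * merge_ht T p q - snd p - snd q"

definition cont_map :: "'a mtree \<Rightarrow> 'b mtree \<Rightarrow> ('a \<times> real \<Rightarrow> 'b \<times> real) \<Rightarrow> bool" where
  "cont_map T1 T2 \<phi> \<longleftrightarrow> (\<forall>p \<in> pts T1. \<forall>e>0. \<exists>d>0. \<forall>q \<in> pts T1.
      tdist T1 p q < d \<longrightarrow> tdist T2 (\<phi> p) (\<phi> q) < e)"

definition eps_compatible ::
  "'a mtree \<Rightarrow> 'b mtree \<Rightarrow> real \<Rightarrow> ('a \<times> real \<Rightarrow> 'b \<times> real) \<Rightarrow> ('b \<times> real \<Rightarrow> 'a \<times> real) \<Rightarrow> bool" where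
  "eps_compatible T1 T2 \<epsilon> \<alpha> \<beta> \<longleftrightarrow>
     0 \<le> \<epsilon> \<and> cont_map T1 T2 \<alpha> \<and> cont_map T2 T1 \<beta> \<and>
     (\<forall>u \<in> pts T1. \<alpha> u \<in> pts T2 \<and> snd (\<alpha> u) = snd u + \<epsilon> \<and> \<beta> (\<alpha> u) = up T1 u (2 * \<epsilon>)) \<and>
     (\<forall>w \<in> pts T2. \<beta> w \<in> pts T1 \<and> snd (\<beta> w) = snd w + \<epsilon> \<and> \<alpha> (\<beta> w) = up T2 w (2 * \<epsilon>))"

definition interleaving_dist :: "'a mtree \<Rightarrow> 'b mtree \<Rightarrow> real" where
  "interleaving_dist T1 T2 = Inf {\<epsilon>. \<exists>\<alpha> \<beta>. eps_compatible T1 T2 \<epsilon> \<alpha> \<beta>}"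

end

theory Submission
  imports Defs
begin


lemma na_refl[simp]: "node_anc T v v"
  unfolding node_anc_def by (rule exI[of _ 0]) auto

lemma na_step: "v \<noteq> root T \<Longrightarrow> node_anc T (par T v) w \<Longrightarrow> node_anc T v w"
  unfolding node_anc_def
proof (elim exE conjE)
  fix k assume "v \<noteq> root T" "w = (par T ^^ k) (par T v)" "\<forall>i<k. (par T ^^ i) (par T v) \<noteq> root T"
  then show "\<exists>k. w = (par T ^^ k) v \<and> (\<forall>i<k. (par T ^^ i) v \<noteq> root T)"
    apply (intro exI[of _ "Suc k"])
    apply (auto simp: funpow_Suc_right simp del: funpow.simps)
    by (metis Suc_less_eq comp_apply funpow.simps(1) funpow_Suc_right id_apply less_Suc_eq_0_disj)
qed

lemma na_cases: "node_anc T v w \<Longrightarrow> w = v \<or> (v \<noteq> root T \<and> node_anc T (par T v) w)"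
  unfolding node_anc_def
proof (elim exE conjE)
  fix k assume h: "w = (par T ^^ k) v" "\<forall>i<k. (par T ^^ i) v \<noteq> root T"
  show "w = v \<or> v \<noteq> root T \<and> (\<exists>k. w = (par T ^^ k) (par T v) \<and> (\<forall>i<k. (par T ^^ i) (par T v) \<noteq> root T))"
  proof (cases k)
    case 0 then show ?thesis using h by simp
  next
    case (Suc m)
    have "v \<noteq> root T" using h(2) Suc by (metis funpow_0 zero_less_Suc)
    moreover have "w = (par T ^^ m) (par T v)" using h(1) Suc by (simp add: funpow_Suc_right del: funpow.simps)
    moreover have "\<forall>i<m. (par T ^^ i) (par T v) \<noteq> root T"
      using h(2) Suc by (metis Suc_less_eq comp_apply funpow_Suc_right)
    ultimately show ?thesis by blast
  qed
qed

lemma na_induct[consumes 1, case_names refl step]: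
  assumes "node_anc T v w"
    and "\<And>v. P v v"
    and "\<And>v. v \<noteq> root T \<Longrightarrow> node_anc T (par T v) w \<Longrightarrow> P (par T v) w \<Longrightarrow> P v w"
  shows "P v w"
proof -
  obtain k where k: "w = (par T ^^ k) v" "\<forall>i<k. (par T ^^ i) v \<noteq> root T"
    using assms(1) unfolding node_anc_def by blast
  have "\<And>v. w = (par T ^^ k) v \<Longrightarrow> (\<forall>i<k. (par T ^^ i) v \<noteq> root T) \<Longrightarrow> P v w"
  proof (induction k)
    case 0 then show ?case using assms(2) by simp
  next
    case (Suc m v)
    have v: "v \<noteq> root T" using Suc.prems(2) by (metis funpow_0 zero_less_Suc)
    have w: "w = (par T ^^ m) (par T v)" using Suc.prems(1) by (simp add: funpow_Suc_right del: funpow.simps)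
    have ii: "\<forall>i<m. (par T ^^ i) (par T v) \<noteq> root T"
      using Suc.prems(2) by (metis Suc_less_eq comp_apply funpow_Suc_right)
    have "node_anc T (par T v) w" unfolding node_anc_def using w ii by blast
    then show ?case using assms(3)[OF v] Suc.IH[OF w ii] by blast
  qed
  then show ?thesis using k by blast
qed

lemma na_trans: "node_anc T u v \<Longrightarrow> node_anc T v w \<Longrightarrow> node_anc T u w"
  by (induction u v rule: na_induct) (auto intro: na_step)

lemma na_root_top: "node_anc T (root T) w \<Longrightarrow> w = root T"
  using na_cases by fastforce

definition CA where "CA T p q = {w. w \<in> pts T \<and> pt_anc T p w \<and> pt_anc T q w}"

context
  fixes T :: "'a mtree"
  assumes mt: "merge_tree T"
begin

lemma par_in: "v \<in> nodes T \<Longrightarrow> v \<noteq> root T \<Longrightarrow> par T v \<in> nodes T"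
  using mt unfolding merge_tree_def by auto

lemma par_ht: "v \<in> nodes T \<Longrightarrow> v \<noteq> root T \<Longrightarrow> ht T v < ht T (par T v)"
  using mt unfolding merge_tree_def by auto

lemma root_in: "root T \<in> nodes T" using mt unfolding merge_tree_def by auto
lemma fin_nodes: "finite (nodes T)" using mt unfolding merge_tree_def by auto

lemma na_nodes: "node_anc T v w \<Longrightarrow> v \<in> nodes T \<Longrightarrow> w \<in> nodes T \<and> ht T v \<le> ht T w"
proof (induction v w rule: na_induct)
  case (refl v) then show ?case by simp
next
  case (step v)
  then show ?case using par_in[of v] par_ht[of v] by fastforce
qed

lemma na_strict: "node_anc T v w \<Longrightarrow> v \<in> nodes T \<Longrightarrow> w \<noteq> v \<Longrightarrow>
    v \<noteq> root T \<and> node_anc T (par T v) w \<and> ht T (par T v) \<le> ht T w"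
proof -
  assume a: "node_anc T v w" "v \<in> nodes T" "w \<noteq> v"
  have r: "v \<noteq> root T" "node_anc T (par T v) w" using na_cases[OF a(1)] a(3) by auto
  then have "par T v \<in> nodes T" using par_in a(2) by blast
  then have "ht T (par T v) \<le> ht T w" using na_nodes r(2) by blast
  then show ?thesis using r by blast
qed

lemma na_antisym: "node_anc T v w \<Longrightarrow> node_anc T w v \<Longrightarrow> v \<in> nodes T \<Longrightarrow> v = w"
proof (rule ccontr)
  assume a: "node_anc T v w" "node_anc T w v" "v \<in> nodes T" "v \<noteq> w"
  then have "v \<noteq> root T" "ht T (par T v) \<le> ht T w" using na_strict by metis+
  moreover have "ht T v < ht T (par T v)" using par_ht a(3) calculation(1) by blast
  moreover have "w \<in> nodes T" "ht T v \<le> ht T w" using na_nodes a(1,3) by blast+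
  moreover have "ht T w \<le> ht T v" using na_nodes a(2) calculation(4) by blast
  ultimately show False by simp
qed

lemma na_linear: "node_anc T v a \<Longrightarrow> node_anc T v b \<Longrightarrow> node_anc T a b \<or> node_anc T b a"
proof (induction v a arbitrary: b rule: na_induct)
  case (refl v) then show ?case by simp
next
  case (step v)
  from na_cases[OF step.prems] show ?case
    using step by (auto intro: na_step)
qed

lemma na_root: "v \<in> nodes T \<Longrightarrow> node_anc T v (root T)"
proof (induction v rule: measure_induct_rule[where f="\<lambda>v. card {w \<in> nodes T. ht T v < ht T w}"])
  case (less v)
  show ?case
  proof (cases "v = root T")
    case True then show ?thesis by simp
  next
    case False
    have pin: "par T v \<in> nodes T" and ph: "ht T v < ht T (par T v)" using par_in par_ht less.prems False by auto
    have "{w \<in> nodes T. ht T (par T v) < ht T w} \<subset> {w \<in> nodes T. ht T v < ht T w}"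
      using pin ph by auto
    then have c: "card {w \<in> nodes T. ht T (par T v) < ht T w} < card {w \<in> nodes T. ht T v < ht T w}"
      by (rule psubset_card_mono[rotated]) (simp add: fin_nodes)
    have "node_anc T (par T v) (root T)" by (rule less.IH[OF c pin])
    then show ?thesis by (rule na_step[OF False])
  qed
qed


lemma pts_iff: "(v,t) \<in> pts T \<longleftrightarrow> v \<in> nodes T \<and> ht T v \<le> t \<and> (v \<noteq> root T \<longrightarrow> t < ht T (par T v))"
  by (simp add: pts_def)

lemma pt_anc_refl[simp]: "pt_anc T p p" by (simp add: pt_anc_def)

lemma pt_anc_trans: "pt_anc T p q \<Longrightarrow> pt_anc T q w \<Longrightarrow> pt_anc T p w"
  unfolding pt_anc_def using na_trans by fastforce

lemma up_ex: assumes "p \<in> pts T" "snd p \<le> s"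
  shows "\<exists>q. q \<in> pts T \<and> pt_anc T p q \<and> snd q = s"
proof -
  obtain v t where p: "p = (v,t)" by (cases p)
  have v: "v \<in> nodes T" "ht T v \<le> t" using assms p by (auto simp: pts_def)
  define A where "A = {a. node_anc T v a \<and> ht T a \<le> s}"
  have finA: "finite A" unfolding A_def
    by (rule finite_subset[OF _ fin_nodes]) (use na_nodes v in auto)
  have vA: "v \<in> A" unfolding A_def using v assms p by auto
  obtain a where a: "a \<in> A" "\<forall>b\<in>A. ht T b \<le> ht T a"
  proof -
    have "Max (ht T ` A) \<in> ht T ` A" using finA vA by (intro Max_in) auto
    then obtain a where "a \<in> A" "ht T a = Max (ht T ` A)" by auto
    moreover have "\<forall>b\<in>A. ht T b \<le> Max (ht T ` A)" using finA by auto
    ultimately show ?thesis using that by auto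
  qed
  have an: "node_anc T v a" "ht T a \<le> s" using a unfolding A_def by auto
  have ain: "a \<in> nodes T" using na_nodes[OF an(1) v(1)] by simp
  have "a \<noteq> root T \<longrightarrow> s < ht T (par T a)"
  proof
    assume ar: "a \<noteq> root T"
    show "s < ht T (par T a)"
    proof (rule ccontr)
      assume "\<not> s < ht T (par T a)"
      then have "par T a \<in> A" unfolding A_def using an ar na_trans na_step[OF ar na_refl] by fastforce
      then show False using a(2) par_ht[OF ain ar] by fastforce
    qed
  qed
  then have "(a, s) \<in> pts T" using ain an by (simp add: pts_def)
  moreover have "pt_anc T p (a,s)" using an p assms by (simp add: pt_anc_def)
  ultimately show ?thesis by auto
qed

lemma same_ht_anc: "q1 \<in> pts T \<Longrightarrow> q2 \<in> pts T \<Longrightarrow> node_anc T (fst q1) (fst q2) \<Longrightarrow> snd q1 = snd q2 \<Longrightarrow> q1 = q2"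
proof (rule ccontr)
  assume a: "q1 \<in> pts T" "q2 \<in> pts T" "node_anc T (fst q1) (fst q2)" "snd q1 = snd q2" "q1 \<noteq> q2"
  then have ne: "fst q2 \<noteq> fst q1" by (simp add: prod_eq_iff)
  have f1: "fst q1 \<in> nodes T" using a(1) by (cases q1) (auto simp: pts_def)
  have "fst q1 \<noteq> root T" "ht T (par T (fst q1)) \<le> ht T (fst q2)" using na_strict[OF a(3) f1 ne] by blast+
  moreover have "snd q1 < ht T (par T (fst q1))" using a(1) calculation(1) by (cases q1) (auto simp: pts_def)
  moreover have "ht T (fst q2) \<le> snd q2" using a(2) by (cases q2) (auto simp: pts_def)
  ultimately show False using a(4) by simp
qed

lemma up_uniq: "q1 \<in> pts T \<Longrightarrow> q2 \<in> pts T \<Longrightarrow> pt_anc T p q1 \<Longrightarrow> pt_anc T p q2 \<Longrightarrow> snd q1 = snd q2 \<Longrightarrow> q1 = q2"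
  unfolding pt_anc_def using na_linear same_ht_anc by metis

lemma up_char: assumes "p \<in> pts T" "0 \<le> e"
  shows "up T p e \<in> pts T \<and> pt_anc T p (up T p e) \<and> snd (up T p e) = snd p + e"
proof -
  obtain q where q: "q \<in> pts T" "pt_anc T p q" "snd q = snd p + e" using up_ex[OF assms(1), of "snd p + e"] assms by auto
  have "\<exists>!w. w \<in> pts T \<and> pt_anc T p w \<and> snd w - snd p = e"
  proof (rule ex1I[of _ q])
    show "q \<in> pts T \<and> pt_anc T p q \<and> snd q - snd p = e" using q by simp
    fix w assume "w \<in> pts T \<and> pt_anc T p w \<and> snd w - snd p = e"
    then show "w = q" using up_uniq[of w q p] q by auto
  qed
  from theI'[OF this] show ?thesis unfolding up_def by auto
qed

lemma up_pts: "p \<in> pts T \<Longrightarrow> 0 \<le> e \<Longrightarrow> up T p e \<in> pts T" using up_char by blast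
lemma up_anc: "p \<in> pts T \<Longrightarrow> 0 \<le> e \<Longrightarrow> pt_anc T p (up T p e)" using up_char by blast
lemma up_snd[simp]: "p \<in> pts T \<Longrightarrow> 0 \<le> e \<Longrightarrow> snd (up T p e) = snd p + e" using up_char by blast

lemma up_eqI: assumes "p \<in> pts T" "q \<in> pts T" "pt_anc T p q" "snd q = snd p + e"
  shows "up T p e = q"
proof -
  have e: "0 \<le> e" using assms(3,4) by (simp add: pt_anc_def)
  show ?thesis using up_uniq[OF up_pts[OF assms(1) e] assms(2) up_anc[OF assms(1) e] assms(3)] e assms by simp
qed

lemma up_0[simp]: "p \<in> pts T \<Longrightarrow> up T p 0 = p"
  by (rule up_eqI) auto

lemma up_add: assumes "p \<in> pts T" "0 \<le> a" "0 \<le> b"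
  shows "up T (up T p a) b = up T p (a + b)"
proof -
  have u1: "up T p a \<in> pts T" "pt_anc T p (up T p a)" "snd (up T p a) = snd p + a"
    using up_char[OF assms(1,2)] by auto
  have u2: "up T (up T p a) b \<in> pts T" "pt_anc T (up T p a) (up T (up T p a) b)" "snd (up T (up T p a) b) = snd p + a + b"
    using up_char[OF u1(1) assms(3)] u1 by auto
  have "up T p (a+b) = up T (up T p a) b"
    by (rule up_eqI[OF assms(1) u2(1) pt_anc_trans[OF u1(2) u2(2)]]) (simp add: u2(3))
  then show ?thesis by simp
qed

lemma anc_up: "p \<in> pts T \<Longrightarrow> q \<in> pts T \<Longrightarrow> pt_anc T p q \<Longrightarrow> q = up T p (snd q - snd p)"
  by (rule up_eqI[symmetric]) auto

lemma node_le_root: "v \<in> nodes T \<Longrightarrow> ht T v \<le> ht T (root T)"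
  using na_nodes na_root by blast

lemma pts_le_root: "p \<in> pts T \<Longrightarrow> fst p \<noteq> root T \<Longrightarrow> snd p < ht T (root T)"
proof -
  assume p: "p \<in> pts T" "fst p \<noteq> root T"
  have "fst p \<in> nodes T" "snd p < ht T (par T (fst p))" using p by (auto simp: pts_def)
  moreover have "ht T (par T (fst p)) \<le> ht T (root T)" using calculation p(2) par_in node_le_root by blast
  ultimately show ?thesis by simp
qed

lemma root_pt: "p \<in> pts T \<Longrightarrow> snd p \<le> s \<Longrightarrow> ht T (root T) \<le> s \<Longrightarrow> (root T, s) \<in> pts T \<and> pt_anc T p (root T, s)"
  by (cases p) (auto simp: pts_def pt_anc_def root_in intro: na_root)

lemma merge_ht_CA: "merge_ht T p q = Inf (snd ` CA T p q)"
proof -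
  have "{snd w |w. w \<in> pts T \<and> pt_anc T p w \<and> pt_anc T q w} = snd ` CA T p q"
    unfolding CA_def by blast
  then show ?thesis unfolding merge_ht_def by simp
qed

lemma CA_ne: assumes "p \<in> pts T" "q \<in> pts T" shows "CA T p q \<noteq> {}"
proof -
  define M where "M = max (max (snd p) (snd q)) (ht T (root T))"
  have "(root T, M) \<in> CA T p q" unfolding CA_def using root_pt[OF assms(1), of M] root_pt[OF assms(2), of M]
    by (auto simp: M_def)
  then show ?thesis by blast
qed

lemma merge_lb: "p \<in> pts T \<Longrightarrow> q \<in> pts T \<Longrightarrow> snd p \<le> merge_ht T p q"
  unfolding merge_ht_CA using CA_ne by (intro cInf_greatest) (auto simp: CA_def pt_anc_def)

lemma merge_le: "w \<in> CA T p q \<Longrightarrow> merge_ht T p q \<le> snd w"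
  unfolding merge_ht_CA
  by (rule cInf_lower) (auto simp: bdd_below_def CA_def pt_anc_def intro!: exI[of _ "snd p"])

lemma merge_sym: "merge_ht T p q = merge_ht T q p"
  unfolding merge_ht_def by meson

lemma tdist_sym: "tdist T p q = tdist T q p"
  unfolding tdist_def using merge_sym by simp

lemma tdist_up: assumes "p \<in> pts T" "0 \<le> r" shows "tdist T p (up T p r) = r"
proof -
  have "merge_ht T p (up T p r) \<le> snd p + r"
    using merge_le[of "up T p r" p "up T p r"] assms up_pts up_anc by (auto simp: CA_def)
  moreover have "snd p + r \<le> merge_ht T p (up T p r)"
    using merge_lb[of "up T p r" p] merge_sym assms up_pts by simp
  ultimately show ?thesis unfolding tdist_def using assms by simp
qed

lemma branch: assumes "x \<in> pts T" "y \<in> pts T" "snd x \<le> snd y" "y \<noteq> up T x (snd y - snd x)"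
  shows "\<exists>n\<in>nodes T. snd y < ht T n \<and> ht T n \<le> merge_ht T x y"
proof -
  have nb: "\<not> node_anc T (fst x) (fst y)"
  proof
    assume "node_anc T (fst x) (fst y)"
    then have "pt_anc T x y" using assms(3) by (simp add: pt_anc_def)
    then show False using anc_up assms by blast
  qed
  obtain w0 where w0: "w0 \<in> CA T x y" using CA_ne assms by blast
  have yn: "fst y \<in> nodes T" using assms(2) by (cases y) (auto simp: pts_def)
  have key: "\<And>w. w \<in> CA T x y \<Longrightarrow> fst y \<noteq> root T \<and> ht T (par T (fst y)) \<le> snd w"
  proof -
    fix w assume w: "w \<in> CA T x y"
    then have "node_anc T (fst x) (fst w)" "node_anc T (fst y) (fst w)" "w \<in> pts T" by (auto simp: CA_def pt_anc_def)
    moreover have "fst w \<noteq> fst y" using nb calculation by auto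
    ultimately have "fst y \<noteq> root T" "ht T (par T (fst y)) \<le> ht T (fst w)"
      using na_strict yn by blast+
    moreover have "ht T (fst w) \<le> snd w" using \<open>w \<in> pts T\<close> by (cases w) (auto simp: pts_def)
    ultimately show "fst y \<noteq> root T \<and> ht T (par T (fst y)) \<le> snd w" by simp
  qed
  have yr: "fst y \<noteq> root T" using key w0 by blast
  have "snd y < ht T (par T (fst y))" using assms(2) yr by (cases y) (auto simp: pts_def)
  moreover have "ht T (par T (fst y)) \<le> merge_ht T x y"
    unfolding merge_ht_CA using CA_ne assms key by (intro cInf_greatest) auto
  moreover have "par T (fst y) \<in> nodes T" using par_in yn yr by blast
  ultimately show ?thesis by blast
qed

lemma gap: "\<exists>\<eta>>0. \<forall>w\<in>nodes T. h < ht T w \<longrightarrow> h + \<eta> \<le> ht T w"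
proof (cases "{w\<in>nodes T. h < ht T w} = {}")
  case True then show ?thesis by (intro exI[of _ 1]) auto
next
  case False
  define S where "S = (\<lambda>w. ht T w - h) ` {w\<in>nodes T. h < ht T w}"
  have fS: "finite S" "S \<noteq> {}" using False fin_nodes unfolding S_def by auto
  have "Min S > 0" using fS by (subst Min_gr_iff) (auto simp: S_def)
  moreover have "\<forall>w\<in>nodes T. h < ht T w \<longrightarrow> h + Min S \<le> ht T w"
  proof (intro ballI impI)
    fix w assume "w \<in> nodes T" "h < ht T w"
    then have "ht T w - h \<in> S" by (auto simp: S_def)
    then have "Min S \<le> ht T w - h" by (rule Min_le[OF fS(1)])
    then show "h + Min S \<le> ht T w" by simp
  qed
  ultimately show ?thesis by blast
qed

lemma uniq_gap: assumes "x \<in> pts T" "y \<in> pts T" "snd x = snd y" "0 \<le> d"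
  "up T x d = up T y d" "\<forall>w\<in>nodes T. \<not> (snd x < ht T w \<and> ht T w \<le> snd x + d)"
  shows "x = y"
proof -
  have A: "fst (up T z d) = fst z" if z: "z \<in> pts T" "snd z = snd x" for z
  proof (rule ccontr)
    assume ne: "fst (up T z d) \<noteq> fst z"
    have "node_anc T (fst z) (fst (up T z d))" using up_anc[OF z(1) assms(4)] by (simp add: pt_anc_def)
    moreover have "fst z \<in> nodes T" using z by (cases z) (auto simp: pts_def)
    ultimately have "fst z \<noteq> root T" "ht T (par T (fst z)) \<le> ht T (fst (up T z d))" "par T (fst z) \<in> nodes T"
      using na_strict ne par_in by blast+
    moreover have "ht T (fst (up T z d)) \<le> snd (up T z d)" using up_pts[OF z(1) assms(4)]
      by (cases "up T z d") (auto simp: pts_def)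
    moreover have "snd z < ht T (par T (fst z))" using z calculation(1) by (cases z) (auto simp: pts_def)
    ultimately show False using assms(6) z up_snd[OF z(1) assms(4)] by fastforce
  qed
  have "fst x = fst y" using A[of x] A[of y] assms by metis
  then show ?thesis using assms(3) by (simp add: prod_eq_iff)
qed

end


lemma cont_anc:
  assumes m1: "merge_tree T1" and m2: "merge_tree T2" and c: "cont_map T1 T2 \<alpha>"
    and ap: "\<forall>p\<in>pts T1. \<alpha> p \<in> pts T2 \<and> snd (\<alpha> p) = snd p + \<epsilon>"
    and p: "p \<in> pts T1" and s: "0 \<le> s"
  shows "\<alpha> (up T1 p s) = up T2 (\<alpha> p) s"
proof (rule ccontr)
  assume ns: "\<not> ?thesis"
  define A where "A = {s. 0 \<le> s \<and> \<alpha> (up T1 p s) \<noteq> up T2 (\<alpha> p) s}"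
  have Ane: "A \<noteq> {}" using ns s unfolding A_def by auto
  have bdd: "bdd_below A" unfolding A_def bdd_below_def by auto
  define \<sigma> where "\<sigma> = Inf A"
  have sig0: "0 \<le> \<sigma>" unfolding \<sigma>_def using Ane by (intro cInf_greatest) (auto simp: A_def)
  have below: "\<And>s. 0 \<le> s \<Longrightarrow> s < \<sigma> \<Longrightarrow> \<alpha> (up T1 p s) = up T2 (\<alpha> p) s"
  proof (rule ccontr)
    fix s assume "0 \<le> s" "s < \<sigma>" "\<alpha> (up T1 p s) \<noteq> up T2 (\<alpha> p) s"
    then have "s \<in> A" by (auto simp: A_def)
    then have "\<sigma> \<le> s" unfolding \<sigma>_def by (rule cInf_lower[OF _ bdd])
    then show False using \<open>s < \<sigma>\<close> by simp
  qed
  define q where "q = up T1 p \<sigma>"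
  have q: "q \<in> pts T1" using up_pts[OF m1 p sig0] q_def by simp
  have aq: "\<alpha> q \<in> pts T2" "snd (\<alpha> q) = snd p + \<sigma> + \<epsilon>" using ap q up_snd[OF m1 p sig0] q_def by auto
  define H where "H = snd (\<alpha> q)"
  obtain \<eta> where eta: "\<eta> > 0" "\<forall>w\<in>nodes T2. H < ht T2 w \<longrightarrow> H + \<eta> \<le> ht T2 w" using gap[OF m2] by blast
  obtain d where d: "d > 0" "\<forall>q'\<in>pts T1. tdist T1 q q' < d \<longrightarrow> tdist T2 (\<alpha> q) (\<alpha> q') < \<eta>"
    using c q eta(1) unfolding cont_map_def by blast
  show False
  proof (cases "\<alpha> q = up T2 (\<alpha> p) \<sigma>")
    case True
    define \<rho> where "\<rho> = min d \<eta> / 2"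
    have rho: "\<rho> > 0" "\<rho> < d" "\<rho> < \<eta>" using d eta by (auto simp: \<rho>_def)
    obtain s' where s': "s' \<in> A" "s' < \<sigma> + \<rho>" using Ane rho(1) unfolding \<sigma>_def
      by (meson cInf_lessD less_add_same_cancel1)
    have "\<sigma> \<le> s'" unfolding \<sigma>_def by (rule cInf_lower[OF s'(1) bdd])
    define r where "r = s' - \<sigma>"
    have r: "0 \<le> r" "r < \<rho>" using \<open>\<sigma> \<le> s'\<close> s' r_def by auto
    have q': "up T1 p s' = up T1 q r" using up_add[OF m1 p sig0 r(1)] q_def r_def by simp
    have q'p: "up T1 q r \<in> pts T1" using up_pts[OF m1 q r(1)] .
    have "tdist T1 q (up T1 q r) < d" using tdist_up[OF m1 q r(1)] r rho by simp
    then have td: "tdist T2 (\<alpha> q) (\<alpha> (up T1 q r)) < \<eta>" using d q'p by blast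
    define x where "x = \<alpha> q"
    define y where "y = \<alpha> (up T1 q r)"
    have xy: "x \<in> pts T2" "y \<in> pts T2" "snd y = snd x + r"
      using aq ap q'p up_snd[OF m1 q r(1)] up_snd[OF m1 p sig0] q_def unfolding x_def y_def by auto
    have "y = up T2 x r"
    proof (rule ccontr)
      assume "y \<noteq> up T2 x r"
      then obtain n where n: "n \<in> nodes T2" "snd y < ht T2 n" "ht T2 n \<le> merge_ht T2 x y"
        using branch[OF m2 xy(1,2)] xy r by auto
      have "H + \<eta> \<le> ht T2 n" using eta n xy r unfolding H_def x_def by auto
      then have "tdist T2 x y \<ge> 2 * \<eta> - r" unfolding tdist_def using n xy unfolding H_def x_def by auto
      then show False using td r rho unfolding x_def y_def by auto
    qed
    then have "\<alpha> (up T1 p s') = up T2 (\<alpha> p) s'"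
      using q' True up_add[OF m2 _ sig0 r(1), of "\<alpha> p"] ap p r_def unfolding x_def y_def by auto
    then show False using s'(1) unfolding A_def by auto
  next
    case False
    have sp: "\<sigma> > 0"
    proof (rule ccontr)
      assume "\<not> \<sigma> > 0" then have "\<sigma> = 0" using sig0 by simp
      then show False using False q_def p ap by (simp add: up_0[OF m1] up_0[OF m2])
    qed
    define r where "r = min d \<sigma> / 2"
    have r: "0 < r" "r < d" "r \<le> \<sigma>" using d sp by (auto simp: r_def)
    define s' where "s' = \<sigma> - r"
    have s'0: "0 \<le> s'" "s' < \<sigma>" using r s'_def by auto
    have q'p: "up T1 p s' \<in> pts T1" using up_pts[OF m1 p s'0(1)] .
    have qq: "q = up T1 (up T1 p s') r" using up_add[OF m1 p s'0(1)] r q_def s'_def by simp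
    have "tdist T1 (up T1 p s') q = r" using tdist_up[OF m1 q'p, of r] r qq by simp
    then have "tdist T1 q (up T1 p s') < d" using r tdist_sym[OF m1, of q "up T1 p s'"] by simp
    then have td: "tdist T2 (\<alpha> q) (\<alpha> (up T1 p s')) < \<eta>" using d q'p by blast
    define x where "x = \<alpha> (up T1 p s')"
    define y where "y = \<alpha> q"
    have xe: "x = up T2 (\<alpha> p) s'" using below s'0 x_def by simp
    have xy: "x \<in> pts T2" "y \<in> pts T2" "snd y = snd x + r"
      using aq ap q'p up_snd[OF m1 p s'0(1)] unfolding x_def y_def s'_def by auto
    have "y = up T2 x r"
    proof (rule ccontr)
      assume "y \<noteq> up T2 x r"
      then obtain n where n: "n \<in> nodes T2" "snd y < ht T2 n" "ht T2 n \<le> merge_ht T2 x y"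
        using branch[OF m2 xy(1,2)] xy r by auto
      have "H + \<eta> \<le> ht T2 n" using eta n xy r unfolding H_def y_def by auto
      then have ge: "tdist T2 x y \<ge> 2 * \<eta> + r" unfolding tdist_def using n xy unfolding H_def y_def by auto
      have "tdist T2 y x < \<eta>" using td unfolding x_def y_def .
      then show False using ge tdist_sym[OF m2, of x y] r eta by linarith
    qed
    then have "\<alpha> q = up T2 (\<alpha> p) \<sigma>"
      using xe up_add[OF m2 _ s'0(1), of "\<alpha> p" r] ap p r s'_def unfolding y_def by auto
    then show False using False by simp
  qed
qed

lemma anc_cont:
  assumes m1: "merge_tree T1" and m2: "merge_tree T2"
    and ap: "\<forall>p\<in>pts T1. \<phi> p \<in> pts T2 \<and> snd (\<phi> p) = snd p + c"
    and an: "\<forall>p\<in>pts T1. \<forall>s\<ge>0. \<phi> (up T1 p s) = up T2 (\<phi> p) s"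
  shows "cont_map T1 T2 \<phi>"
proof -
  have lip: "tdist T2 (\<phi> p) (\<phi> q) \<le> tdist T1 p q" if p: "p \<in> pts T1" and q: "q \<in> pts T1" for p q
  proof -
    have "\<forall>w\<in>CA T1 p q. merge_ht T2 (\<phi> p) (\<phi> q) - c \<le> snd w"
    proof
      fix w assume w: "w \<in> CA T1 p q"
      have wp: "w \<in> pts T1" "pt_anc T1 p w" "pt_anc T1 q w" using w by (auto simp: CA_def)
      have e1: "0 \<le> snd w - snd p" "0 \<le> snd w - snd q" using wp by (auto simp: pt_anc_def)
      have "\<phi> w = up T2 (\<phi> p) (snd w - snd p)" using anc_up[OF m1 p wp(1,2)] an p e1 by metis
      then have a1: "pt_anc T2 (\<phi> p) (\<phi> w)" using up_anc[OF m2 _ e1(1)] ap p by auto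
      have "\<phi> w = up T2 (\<phi> q) (snd w - snd q)" using anc_up[OF m1 q wp(1,3)] an q e1 by metis
      then have a2: "pt_anc T2 (\<phi> q) (\<phi> w)" using up_anc[OF m2 _ e1(2)] ap q by auto
      have "merge_ht T2 (\<phi> p) (\<phi> q) \<le> snd (\<phi> w)"
        using merge_le[OF m2, of "\<phi> w" "\<phi> p" "\<phi> q"] a1 a2 ap wp by (auto simp: CA_def)
      then show "merge_ht T2 (\<phi> p) (\<phi> q) - c \<le> snd w" using ap wp by auto
    qed
    then have "merge_ht T2 (\<phi> p) (\<phi> q) - c \<le> merge_ht T1 p q"
      unfolding merge_ht_CA[OF m1] using CA_ne[OF m1 p q] by (intro cInf_greatest) auto
    then show ?thesis unfolding tdist_def using ap p q by auto
  qed
  show ?thesis unfolding cont_map_def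
  proof (intro ballI allI impI)
    fix p e assume p: "p \<in> pts T1" and e: "(0::real) < e"
    show "\<exists>d>0. \<forall>q\<in>pts T1. tdist T1 p q < d \<longrightarrow> tdist T2 (\<phi> p) (\<phi> q) < e"
    proof (intro exI[of _ e] conjI ballI impI)
      fix q assume "q \<in> pts T1" "tdist T1 p q < e"
      then show "tdist T2 (\<phi> p) (\<phi> q) < e" using lip[OF p \<open>q \<in> pts T1\<close>] by simp
    qed (rule e)
  qed
qed



lemma nodept: "merge_tree T \<Longrightarrow> v \<in> nodes T \<Longrightarrow> (v, ht T v) \<in> pts T"
  using par_ht by (auto simp: pts_def)

lemma pt_from_node: assumes "merge_tree T" "p \<in> pts T"
  shows "fst p \<in> nodes T" "ht T (fst p) \<le> snd p" "p = up T (fst p, ht T (fst p)) (snd p - ht T (fst p))"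
proof -
  show f: "fst p \<in> nodes T" "ht T (fst p) \<le> snd p" using assms(2) by (cases p; auto simp: pts_def)+
  show "p = up T (fst p, ht T (fst p)) (snd p - ht T (fst p))"
    by (rule up_eqI[OF assms(1) nodept[OF assms(1) f(1)] assms(2), symmetric]) (auto simp: pt_anc_def f)
qed

lemma lower_construct:
  assumes m1: "merge_tree T1" and m2: "merge_tree T2"
    and ap: "\<forall>p\<in>pts T1. \<alpha> p \<in> pts T2 \<and> snd (\<alpha> p) = snd p + \<epsilon>"
    and an: "\<forall>p\<in>pts T1. \<forall>s\<ge>0. \<alpha> (up T1 p s) = up T2 (\<alpha> p) s"
    and l: "0 \<le> lam" "lam \<le> \<epsilon>"
    and g: "\<forall>v\<in>nodes T1. \<forall>w\<in>nodes T2. \<not> (ht T1 v + lam < ht T2 w \<and> ht T2 w \<le> ht T1 v + \<epsilon>)"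
  shows "\<exists>\<alpha>'. (\<forall>p\<in>pts T1. \<alpha>' p \<in> pts T2 \<and> snd (\<alpha>' p) = snd p + lam \<and> up T2 (\<alpha>' p) (\<epsilon> - lam) = \<alpha> p)
      \<and> (\<forall>p\<in>pts T1. \<forall>s\<ge>0. \<alpha>' (up T1 p s) = up T2 (\<alpha>' p) s)"
proof -
  define \<delta> where "\<delta> = \<epsilon> - lam"
  have d0: "0 \<le> \<delta>" using l \<delta>_def by simp
  define L where "L v = (fst (\<alpha> (v, ht T1 v)), ht T1 v + lam)" for v
  have Lp: "L v \<in> pts T2 \<and> up T2 (L v) \<delta> = \<alpha> (v, ht T1 v) \<and> snd (L v) = ht T1 v + lam" if v: "v \<in> nodes T1" for v
  proof -
    define x where "x = \<alpha> (v, ht T1 v)"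
    have x: "x \<in> pts T2" "snd x = ht T1 v + \<epsilon>" using ap nodept[OF m1 v] x_def by auto
    have fx: "fst x \<in> nodes T2" "ht T2 (fst x) \<le> snd x" "fst x \<noteq> root T2 \<longrightarrow> snd x < ht T2 (par T2 (fst x))"
      using x(1) by (cases x; auto simp: pts_def)+
    have "ht T2 (fst x) \<le> ht T1 v + lam" using g v fx x by fastforce
    then have Lin: "L v \<in> pts T2" using fx x l unfolding L_def x_def[symmetric] by (auto simp: pts_def)
    have "up T2 (L v) \<delta> = x"
      by (rule up_eqI[OF m2 Lin x(1)]) (auto simp: L_def x_def[symmetric] pt_anc_def x \<delta>_def l)
    then show ?thesis using Lin by (simp add: x_def L_def)
  qed
  define \<alpha>' where "\<alpha>' p = up T2 (L (fst p)) (snd p - ht T1 (fst p))" for p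
  have a1: "\<alpha>' p \<in> pts T2 \<and> snd (\<alpha>' p) = snd p + lam \<and> up T2 (\<alpha>' p) \<delta> = \<alpha> p" if p: "p \<in> pts T1" for p
  proof -
    note pf = pt_from_node[OF m1 p]
    have h0: "0 \<le> snd p - ht T1 (fst p)" using pf by simp
    have i: "\<alpha>' p \<in> pts T2" using up_pts[OF m2 _ h0] Lp pf unfolding \<alpha>'_def by blast
    have ii: "snd (\<alpha>' p) = snd p + lam" using up_snd[OF m2 _ h0] Lp pf unfolding \<alpha>'_def by simp
    have "up T2 (\<alpha>' p) \<delta> = up T2 (L (fst p)) (\<delta> + (snd p - ht T1 (fst p)))"
      unfolding \<alpha>'_def using up_add[OF m2 _ h0 d0] Lp pf by (simp add: add.commute)
    also have "\<dots> = up T2 (up T2 (L (fst p)) \<delta>) (snd p - ht T1 (fst p))"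
      using up_add[OF m2 _ d0 h0, of "L (fst p)"] Lp[OF pf(1)] by simp
    also have "\<dots> = up T2 (\<alpha> (fst p, ht T1 (fst p))) (snd p - ht T1 (fst p))" using Lp pf by simp
    also have "\<dots> = \<alpha> p" using an nodept[OF m1 pf(1)] h0 pf(3) by metis
    finally show ?thesis using i ii by simp
  qed
  have K: "up T2 (L v) (ht T1 c - ht T1 v) = L c" if v: "v \<in> nodes T1" and vc: "node_anc T1 v c" for v c
  proof -
    have c: "c \<in> nodes T1" "ht T1 v \<le> ht T1 c" using na_nodes[OF m1 vc v] by auto
    have h0: "0 \<le> ht T1 c - ht T1 v" using c by simp
    have nc: "(c, ht T1 c) = up T1 (v, ht T1 v) (ht T1 c - ht T1 v)"
      by (rule up_eqI[OF m1 nodept[OF m1 v] nodept[OF m1 c(1)], symmetric]) (auto simp: pt_anc_def vc c)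
    have y1: "up T2 (L v) (ht T1 c - ht T1 v) \<in> pts T2" using up_pts[OF m2 _ h0] Lp v by blast
    have "up T2 (up T2 (L v) (ht T1 c - ht T1 v)) \<delta> = up T2 (up T2 (L v) \<delta>) (ht T1 c - ht T1 v)"
      using up_add[OF m2 _ h0 d0, of "L v"] up_add[OF m2 _ d0 h0, of "L v"] Lp[OF v] by (simp add: add.commute)
    also have "\<dots> = \<alpha> (c, ht T1 c)" using Lp v an nodept[OF m1 v] h0 nc by metis
    finally have e1: "up T2 (up T2 (L v) (ht T1 c - ht T1 v)) \<delta> = up T2 (L c) \<delta>" using Lp c by simp
    show ?thesis
    proof (rule uniq_gap[OF m2 y1 _ _ d0 e1])
      show "L c \<in> pts T2" using Lp c by blast
      show "snd (up T2 (L v) (ht T1 c - ht T1 v)) = snd (L c)" using up_snd[OF m2 _ h0] Lp v c by simp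
      show "\<forall>w\<in>nodes T2. \<not> (snd (up T2 (L v) (ht T1 c - ht T1 v)) < ht T2 w \<and>
          ht T2 w \<le> snd (up T2 (L v) (ht T1 c - ht T1 v)) + \<delta>)"
        using up_snd[OF m2 _ h0] Lp v g c unfolding \<delta>_def by auto
    qed
  qed
  have a2: "\<alpha>' (up T1 p s) = up T2 (\<alpha>' p) s" if p: "p \<in> pts T1" and s: "0 \<le> s" for p s
  proof -
    note pf = pt_from_node[OF m1 p]
    define p' where "p' = up T1 p s"
    have p': "p' \<in> pts T1" "pt_anc T1 p p'" "snd p' = snd p + s" using up_char[OF m1 p s] p'_def by auto
    note pf' = pt_from_node[OF m1 p'(1)]
    have vc: "node_anc T1 (fst p) (fst p')" using p' by (simp add: pt_anc_def)
    have c: "ht T1 (fst p) \<le> ht T1 (fst p')" using na_nodes[OF m1 vc pf(1)] by simp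
    have h0: "0 \<le> snd p - ht T1 (fst p)" using pf by simp
    have "up T2 (\<alpha>' p) s = up T2 (L (fst p)) (snd p - ht T1 (fst p) + s)"
      unfolding \<alpha>'_def using up_add[OF m2 _ h0 s] Lp pf by simp
    also have "\<dots> = up T2 (up T2 (L (fst p)) (ht T1 (fst p') - ht T1 (fst p))) (snd p' - ht T1 (fst p'))"
      using up_add[OF m2 _ _ , of "L (fst p)" "ht T1 (fst p') - ht T1 (fst p)" "snd p' - ht T1 (fst p')"]
        Lp pf c pf' p' by (simp add: algebra_simps)
    also have "\<dots> = \<alpha>' p'" unfolding \<alpha>'_def using K[OF pf(1) vc] by simp
    finally show ?thesis unfolding p'_def by simp
  qed
  show ?thesis using a1 a2 unfolding \<delta>_def by blast
qed



lemma main_step: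
  assumes m1: "merge_tree T1" and m2: "merge_tree T2"
    and ec: "eps_compatible T1 T2 \<epsilon> \<alpha> \<beta>"
    and l: "0 \<le> lam" "lam \<le> \<epsilon>"
    and g12: "\<forall>v\<in>nodes T1. \<forall>w\<in>nodes T2. \<not> (ht T1 v + lam < ht T2 w \<and> ht T2 w \<le> ht T1 v + \<epsilon>)"
    and g21: "\<forall>v\<in>nodes T2. \<forall>w\<in>nodes T1. \<not> (ht T2 v + lam < ht T1 w \<and> ht T1 w \<le> ht T2 v + \<epsilon>)"
    and g11: "\<forall>v\<in>nodes T1. \<forall>w\<in>nodes T1. \<not> (ht T1 v + 2*lam < ht T1 w \<and> ht T1 w \<le> ht T1 v + 2*\<epsilon>)"
    and g22: "\<forall>v\<in>nodes T2. \<forall>w\<in>nodes T2. \<not> (ht T2 v + 2*lam < ht T2 w \<and> ht T2 w \<le> ht T2 v + 2*\<epsilon>)"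
  shows "\<exists>\<alpha>' \<beta>'. eps_compatible T1 T2 lam \<alpha>' \<beta>'"
proof -
  have e: "cont_map T1 T2 \<alpha>" "cont_map T2 T1 \<beta>"
    "\<forall>u \<in> pts T1. \<alpha> u \<in> pts T2 \<and> snd (\<alpha> u) = snd u + \<epsilon> \<and> \<beta> (\<alpha> u) = up T1 u (2 * \<epsilon>)"
    "\<forall>w \<in> pts T2. \<beta> w \<in> pts T1 \<and> snd (\<beta> w) = snd w + \<epsilon> \<and> \<alpha> (\<beta> w) = up T2 w (2 * \<epsilon>)"
    using ec unfolding eps_compatible_def by auto
  have aa: "\<forall>p\<in>pts T1. \<forall>s\<ge>0. \<alpha> (up T1 p s) = up T2 (\<alpha> p) s"
    using cont_anc[OF m1 m2 e(1)] e(3) by blast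
  have ba: "\<forall>p\<in>pts T2. \<forall>s\<ge>0. \<beta> (up T2 p s) = up T1 (\<beta> p) s"
    using cont_anc[OF m2 m1 e(2)] e(4) by blast
  obtain \<alpha>' where A: "\<forall>p\<in>pts T1. \<alpha>' p \<in> pts T2 \<and> snd (\<alpha>' p) = snd p + lam \<and> up T2 (\<alpha>' p) (\<epsilon> - lam) = \<alpha> p"
      "\<forall>p\<in>pts T1. \<forall>s\<ge>0. \<alpha>' (up T1 p s) = up T2 (\<alpha>' p) s"
    using lower_construct[OF m1 m2 _ aa l g12] e(3) by blast
  obtain \<beta>' where B: "\<forall>p\<in>pts T2. \<beta>' p \<in> pts T1 \<and> snd (\<beta>' p) = snd p + lam \<and> up T1 (\<beta>' p) (\<epsilon> - lam) = \<beta> p"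
      "\<forall>p\<in>pts T2. \<forall>s\<ge>0. \<beta>' (up T2 p s) = up T1 (\<beta>' p) s"
    using lower_construct[OF m2 m1 _ ba l g21] e(4) by blast
  have d0: "0 \<le> \<epsilon> - lam" using l by simp
  have comp: "\<beta>' (\<alpha>' u) = up T1 u (2*lam)" if u: "u \<in> pts T1"
    and mt1: "merge_tree T1" and mt2: "merge_tree T2"
    and A: "\<forall>p\<in>pts T1. \<alpha>' p \<in> pts T2 \<and> snd (\<alpha>' p) = snd p + lam \<and> up T2 (\<alpha>' p) (\<epsilon> - lam) = \<alpha> p"
      "\<forall>p\<in>pts T1. \<forall>s\<ge>0. \<alpha>' (up T1 p s) = up T2 (\<alpha>' p) s"
    and B: "\<forall>p\<in>pts T2. \<beta>' p \<in> pts T1 \<and> snd (\<beta>' p) = snd p + lam \<and> up T1 (\<beta>' p) (\<epsilon> - lam) = \<beta> p"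
      "\<forall>p\<in>pts T2. \<forall>s\<ge>0. \<beta>' (up T2 p s) = up T1 (\<beta>' p) s"
    and ba: "\<forall>p\<in>pts T2. \<forall>s\<ge>0. \<beta> (up T2 p s) = up T1 (\<beta> p) s"
    and e3: "\<forall>u \<in> pts T1. \<alpha> u \<in> pts T2 \<and> snd (\<alpha> u) = snd u + \<epsilon> \<and> \<beta> (\<alpha> u) = up T1 u (2 * \<epsilon>)"
    and g11: "\<forall>v\<in>nodes T1. \<forall>w\<in>nodes T1. \<not> (ht T1 v + 2*lam < ht T1 w \<and> ht T1 w \<le> ht T1 v + 2*\<epsilon>)"
    for u T1 T2 \<alpha> \<beta> \<alpha>' \<beta>'
  proof -
    note pf = pt_from_node[OF mt1 u]
    define v where "v = fst u"
    define n where "n = (v, ht T1 v)"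
    have n: "n \<in> pts T1" using nodept[OF mt1 pf(1)] n_def v_def by simp
    have h0: "0 \<le> snd u - ht T1 v" using pf v_def by simp
    have un: "u = up T1 n (snd u - ht T1 v)" using pf n_def v_def by simp
    have l2: "0 \<le> 2*lam" using l by simp
    have an: "\<alpha>' n \<in> pts T2" using A n by blast
    have ban: "\<beta>' (\<alpha>' n) \<in> pts T1" using B an by blast
    have "up T1 (\<beta>' (\<alpha>' n)) (2*(\<epsilon>-lam)) = up T1 (up T1 (\<beta>' (\<alpha>' n)) (\<epsilon>-lam)) (\<epsilon>-lam)"
      using up_add[OF mt1 ban d0 d0] by simp
    also have "\<dots> = up T1 (\<beta> (\<alpha>' n)) (\<epsilon>-lam)" using B an by simp
    also have "\<dots> = \<beta> (up T2 (\<alpha>' n) (\<epsilon>-lam))" using ba an d0 by simp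
    also have "\<dots> = \<beta> (\<alpha> n)" using A n by simp
    also have "\<dots> = up T1 n (2*\<epsilon>)" using e3 n by simp
    also have "\<dots> = up T1 (up T1 n (2*lam)) (2*(\<epsilon>-lam))" using up_add[OF mt1 n l2, of "2*(\<epsilon>-lam)"] d0 by simp
    finally have eq: "up T1 (\<beta>' (\<alpha>' n)) (2*(\<epsilon>-lam)) = up T1 (up T1 n (2*lam)) (2*(\<epsilon>-lam))" .
    have bn: "\<beta>' (\<alpha>' n) = up T1 n (2*lam)"
    proof (rule uniq_gap[OF mt1 ban up_pts[OF mt1 n l2] _ _ eq])
      show "snd (\<beta>' (\<alpha>' n)) = snd (up T1 n (2 * lam))" using A B n an up_snd[OF mt1 n l2] by simp
      show "0 \<le> 2 * (\<epsilon> - lam)" using d0 by simp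
      show "\<forall>w\<in>nodes T1. \<not> (snd (\<beta>' (\<alpha>' n)) < ht T1 w \<and> ht T1 w \<le> snd (\<beta>' (\<alpha>' n)) + 2 * (\<epsilon> - lam))"
        using A B n an g11 pf(1) unfolding n_def v_def by (auto simp: algebra_simps)
    qed
    have "\<alpha>' u = up T2 (\<alpha>' n) (snd u - ht T1 v)" using A(2) n h0 un by metis
    then have "\<beta>' (\<alpha>' u) = \<beta>' (up T2 (\<alpha>' n) (snd u - ht T1 v))" by simp
    also have "\<dots> = up T1 (\<beta>' (\<alpha>' n)) (snd u - ht T1 v)" using B(2) an h0 by simp
    also have "\<dots> = up T1 n (2*lam + (snd u - ht T1 v))" using bn up_add[OF mt1 n l2 h0] by simp
    also have "\<dots> = up T1 u (2*lam)" using up_add[OF mt1 n h0 l2] un by (simp add: add.commute)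
    finally show ?thesis .
  qed
  have "eps_compatible T1 T2 lam \<alpha>' \<beta>'"
    unfolding eps_compatible_def
  proof (intro conjI ballI)
    show "0 \<le> lam" by fact
    show "cont_map T1 T2 \<alpha>'" using anc_cont[OF m1 m2 _ A(2)] A(1) by blast
    show "cont_map T2 T1 \<beta>'" using anc_cont[OF m2 m1 _ B(2)] B(1) by blast
    fix u assume u: "u \<in> pts T1"
    show "\<alpha>' u \<in> pts T2" "snd (\<alpha>' u) = snd u + lam" using A u by auto
    show "\<beta>' (\<alpha>' u) = up T1 u (2 * lam)" using comp[OF u m1 m2 A B ba e(3) g11] .
  next
    fix w assume w: "w \<in> pts T2"
    show "\<beta>' w \<in> pts T1" "snd (\<beta>' w) = snd w + lam" using B w by auto
    show "\<alpha>' (\<beta>' w) = up T2 w (2 * lam)" using comp[OF w m2 m1 B A aa e(4) g22] .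
  qed
  then show ?thesis by blast
qed

lemma big_compat:
  assumes m1: "merge_tree T1" and m2: "merge_tree T2"
  shows "\<exists>\<epsilon> \<alpha> \<beta>. eps_compatible T1 T2 \<epsilon> \<alpha> \<beta>"
proof -
  define m1v where "m1v = Min (ht T1 ` nodes T1)"
  define m2v where "m2v = Min (ht T2 ` nodes T2)"
  define M1 where "M1 = ht T1 (root T1)"
  define M2 where "M2 = ht T2 (root T2)"
  define \<epsilon> where "\<epsilon> = \<bar>M2 - m1v\<bar> + \<bar>M1 - m2v\<bar>"
  have lo1: "\<And>p. p \<in> pts T1 \<Longrightarrow> m1v \<le> snd p"
  proof -
    fix p assume p: "p \<in> pts T1"
    note pf = pt_from_node[OF m1 p]
    have "m1v \<le> ht T1 (fst p)" unfolding m1v_def using fin_nodes[OF m1] pf by auto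
    then show "m1v \<le> snd p" using pf by simp
  qed
  have lo2: "\<And>p. p \<in> pts T2 \<Longrightarrow> m2v \<le> snd p"
  proof -
    fix p assume p: "p \<in> pts T2"
    note pf = pt_from_node[OF m2 p]
    have "m2v \<le> ht T2 (fst p)" unfolding m2v_def using fin_nodes[OF m2] pf by auto
    then show "m2v \<le> snd p" using pf by simp
  qed
  have mM1: "m1v \<le> M1" unfolding m1v_def M1_def using fin_nodes[OF m1] root_in[OF m1] by auto
  have mM2: "m2v \<le> M2" unfolding m2v_def M2_def using fin_nodes[OF m2] root_in[OF m2] by auto
  define \<alpha> where "\<alpha> p = (root T2, snd p + \<epsilon>)" for p :: "'a \<times> real"
  define \<beta> where "\<beta> p = (root T1, snd p + \<epsilon>)" for p :: "'b \<times> real"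
  have A1: "\<alpha> p \<in> pts T2" if "p \<in> pts T1" for p
    using lo1[OF that] root_in[OF m2] unfolding \<alpha>_def \<epsilon>_def M2_def by (auto simp: pts_def)
  have B1: "\<beta> p \<in> pts T1" if "p \<in> pts T2" for p
    using lo2[OF that] root_in[OF m1] unfolding \<beta>_def \<epsilon>_def M1_def by (auto simp: pts_def)
  have A2: "\<alpha> (up T1 p s) = up T2 (\<alpha> p) s" if "p \<in> pts T1" "0 \<le> s" for p s
  proof -
    have "up T2 (\<alpha> p) s = (root T2, snd p + \<epsilon> + s)"
      by (rule up_eqI[OF m2 A1[OF that(1)]]) (use A1[OF that(1)] that in \<open>auto simp: \<alpha>_def pt_anc_def pts_def\<close>)
    then show ?thesis using that up_snd[OF m1] by (simp add: \<alpha>_def)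
  qed
  have B2: "\<beta> (up T2 p s) = up T1 (\<beta> p) s" if "p \<in> pts T2" "0 \<le> s" for p s
  proof -
    have "up T1 (\<beta> p) s = (root T1, snd p + \<epsilon> + s)"
      by (rule up_eqI[OF m1 B1[OF that(1)]]) (use B1[OF that(1)] that in \<open>auto simp: \<beta>_def pt_anc_def pts_def\<close>)
    then show ?thesis using that up_snd[OF m2] by (simp add: \<beta>_def)
  qed
  have "eps_compatible T1 T2 \<epsilon> \<alpha> \<beta>"
    unfolding eps_compatible_def
  proof (intro conjI ballI)
    show "0 \<le> \<epsilon>" by (simp add: \<epsilon>_def)
    show "cont_map T1 T2 \<alpha>" using anc_cont[OF m1 m2, of \<alpha> \<epsilon>] A1 A2 by (auto simp: \<alpha>_def)
    show "cont_map T2 T1 \<beta>" using anc_cont[OF m2 m1, of \<beta> \<epsilon>] B1 B2 by (auto simp: \<beta>_def)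
    fix u assume u: "u \<in> pts T1"
    show "\<alpha> u \<in> pts T2" "snd (\<alpha> u) = snd u + \<epsilon>" using A1 u by (auto simp: \<alpha>_def)
    have "M1 \<le> snd u + 2*\<epsilon>" using lo1[OF u] mM2 abs_ge_self[of "M2 - m1v"] abs_ge_self[of "M1 - m2v"]
      abs_ge_zero[of "M2 - m1v"] abs_ge_zero[of "M1 - m2v"] unfolding \<epsilon>_def M1_def by (smt (verit))
    then have r: "(root T1, snd u + 2*\<epsilon>) \<in> pts T1 \<and> pt_anc T1 u (root T1, snd u + 2*\<epsilon>)"
      using root_pt[OF m1 u, of "snd u + 2*\<epsilon>"] \<epsilon>_def unfolding M1_def by auto
    show "\<beta> (\<alpha> u) = up T1 u (2 * \<epsilon>)"
      using up_eqI[OF m1 u, of "(root T1, snd u + 2*\<epsilon>)" "2*\<epsilon>"] r by (simp add: \<alpha>_def \<beta>_def)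
  next
    fix w assume w: "w \<in> pts T2"
    show "\<beta> w \<in> pts T1" "snd (\<beta> w) = snd w + \<epsilon>" using B1 w by (auto simp: \<beta>_def)
    have "M2 \<le> snd w + 2*\<epsilon>" using lo2[OF w] mM1 abs_ge_self[of "M2 - m1v"] abs_ge_self[of "M1 - m2v"]
      abs_ge_zero[of "M2 - m1v"] abs_ge_zero[of "M1 - m2v"] unfolding \<epsilon>_def M1_def by (smt (verit))
    then have r: "(root T2, snd w + 2*\<epsilon>) \<in> pts T2 \<and> pt_anc T2 w (root T2, snd w + 2*\<epsilon>)"
      using root_pt[OF m2 w, of "snd w + 2*\<epsilon>"] \<epsilon>_def unfolding M2_def by auto
    show "\<alpha> (\<beta> w) = up T2 w (2 * \<epsilon>)"
      using up_eqI[OF m2 w, of "(root T2, snd w + 2*\<epsilon>)" "2*\<epsilon>"] r by (simp add: \<alpha>_def \<beta>_def)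
  qed
  then show ?thesis by blast
qed



theorem lemma4:
  fixes T1 :: "'a mtree" and T2 :: "'b mtree"
  assumes "merge_tree T1" and "merge_tree T2"
  shows "interleaving_dist T1 T2 \<in>
           {\<bar>ht T1 u - ht T2 w\<bar> | u w. u \<in> nodes T1 \<and> w \<in> nodes T2}
         \<union> {\<bar>ht T1 u - ht T1 u'\<bar> / 2 | u u'. u \<in> nodes T1 \<and> u' \<in> nodes T1}
         \<union> {\<bar>ht T2 w - ht T2 w'\<bar> / 2 | w w'. w \<in> nodes T2 \<and> w' \<in> nodes T2}"
    (is "_ \<in> ?L")
proof -
  note m1 = assms(1) and m2 = assms(2)
  define E where "E = {\<epsilon>. \<exists>\<alpha> \<beta>. eps_compatible T1 T2 \<epsilon> \<alpha> \<beta>}"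
  have finL: "finite ?L"
    using fin_nodes[OF m1] fin_nodes[OF m2]
    by (intro finite_UnI finite_image_set2) auto
  have L0: "0 \<in> ?L" using root_in[OF m1] by force
  have E0: "\<And>\<epsilon>. \<epsilon> \<in> E \<Longrightarrow> 0 \<le> \<epsilon>" unfolding E_def eps_compatible_def by auto
  have key: "\<exists>l\<in>E \<inter> ?L. l \<le> \<epsilon>" if eE: "\<epsilon> \<in> E" for \<epsilon>
  proof (cases "\<epsilon> \<in> ?L")
    case True
    then have "\<epsilon> \<in> E \<inter> ?L" using eE by (rule IntI[rotated])
    then show ?thesis by blast
  next
    case False
    define S where "S = {l\<in>?L. l < \<epsilon>}"
    have e0: "0 < \<epsilon>" using E0[OF eE] L0 False by (cases "\<epsilon> = 0") auto
    have fS1: "finite S" unfolding S_def using finL by (rule finite_subset[rotated]) blast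
    have fS3: "0 \<in> S" unfolding S_def using L0 e0 by blast
    have fS: "finite S" "S \<noteq> {}" "0 \<in> S" using fS1 fS3 by auto
    define lam where "lam = Max S"
    have lS: "lam \<in> S" unfolding lam_def using fS by (intro Max_in) auto
    have lam: "lam \<in> ?L" "lam < \<epsilon>" using lS unfolding S_def by auto
    have lam0: "0 \<le> lam" unfolding lam_def using fS by (intro Max_ge) auto
    have nogap: "\<And>l. l \<in> ?L \<Longrightarrow> lam < l \<Longrightarrow> l \<le> \<epsilon> \<Longrightarrow> False"
    proof -
      fix l assume l: "l \<in> ?L" "lam < l" "l \<le> \<epsilon>"
      then have "l \<noteq> \<epsilon>" using False by auto
      then have "l \<in> S" using l unfolding S_def by auto
      then have "l \<le> lam" unfolding lam_def by (rule Max_ge[OF fS(1)])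
      then show False using l by simp
    qed
    obtain \<alpha> \<beta> where ab: "eps_compatible T1 T2 \<epsilon> \<alpha> \<beta>" using eE unfolding E_def by blast
    have "\<exists>\<alpha>' \<beta>'. eps_compatible T1 T2 lam \<alpha>' \<beta>'"
    proof (rule main_step[OF m1 m2 ab lam0 less_imp_le[OF lam(2)]])
      show "\<forall>v\<in>nodes T1. \<forall>w\<in>nodes T2. \<not> (ht T1 v + lam < ht T2 w \<and> ht T2 w \<le> ht T1 v + \<epsilon>)"
      proof (intro ballI notI)
        fix v w assume v: "v \<in> nodes T1" and w: "w \<in> nodes T2" and h: "ht T1 v + lam < ht T2 w \<and> ht T2 w \<le> ht T1 v + \<epsilon>"
        have inL: "\<bar>ht T1 v - ht T2 w\<bar> \<in> ?L" using v w by blast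
        have eq: "\<bar>ht T1 v - ht T2 w\<bar> = ht T2 w - ht T1 v" using h lam0 by simp
        show False
        proof (rule nogap[OF inL])
          show "lam < \<bar>ht T1 v - ht T2 w\<bar>" using eq h[THEN conjunct1] h[THEN conjunct2] by (simp add: field_simps)
          show "\<bar>ht T1 v - ht T2 w\<bar> \<le> \<epsilon>" using eq h[THEN conjunct1] h[THEN conjunct2] by (simp add: field_simps)
        qed
      qed
      show "\<forall>v\<in>nodes T2. \<forall>w\<in>nodes T1. \<not> (ht T2 v + lam < ht T1 w \<and> ht T1 w \<le> ht T2 v + \<epsilon>)"
      proof (intro ballI notI)
        fix v w assume v: "v \<in> nodes T2" and w: "w \<in> nodes T1" and h: "ht T2 v + lam < ht T1 w \<and> ht T1 w \<le> ht T2 v + \<epsilon>"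
        have inL: "\<bar>ht T1 w - ht T2 v\<bar> \<in> ?L" using v w by blast
        have eq: "\<bar>ht T1 w - ht T2 v\<bar> = ht T1 w - ht T2 v" using h lam0 by simp
        show False
        proof (rule nogap[OF inL])
          show "lam < \<bar>ht T1 w - ht T2 v\<bar>" using eq h[THEN conjunct1] h[THEN conjunct2] by (simp add: field_simps)
          show "\<bar>ht T1 w - ht T2 v\<bar> \<le> \<epsilon>" using eq h[THEN conjunct1] h[THEN conjunct2] by (simp add: field_simps)
        qed
      qed
      show "\<forall>v\<in>nodes T1. \<forall>w\<in>nodes T1. \<not> (ht T1 v + 2*lam < ht T1 w \<and> ht T1 w \<le> ht T1 v + 2*\<epsilon>)"
      proof (intro ballI notI)
        fix v w assume v: "v \<in> nodes T1" and w: "w \<in> nodes T1" and h: "ht T1 v + 2*lam < ht T1 w \<and> ht T1 w \<le> ht T1 v + 2*\<epsilon>"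
        have inL: "\<bar>ht T1 w - ht T1 v\<bar> / 2 \<in> ?L" using v w by blast
        have eq: "\<bar>ht T1 w - ht T1 v\<bar> / 2 = (ht T1 w - ht T1 v) / 2" using h lam0 by simp
        show False
        proof (rule nogap[OF inL])
          show "lam < \<bar>ht T1 w - ht T1 v\<bar> / 2" using eq h[THEN conjunct1] h[THEN conjunct2] by (simp add: field_simps)
          show "\<bar>ht T1 w - ht T1 v\<bar> / 2 \<le> \<epsilon>" using eq h[THEN conjunct1] h[THEN conjunct2] by (simp add: field_simps)
        qed
      qed
      show "\<forall>v\<in>nodes T2. \<forall>w\<in>nodes T2. \<not> (ht T2 v + 2*lam < ht T2 w \<and> ht T2 w \<le> ht T2 v + 2*\<epsilon>)"
      proof (intro ballI notI)
        fix v w assume v: "v \<in> nodes T2" and w: "w \<in> nodes T2" and h: "ht T2 v + 2*lam < ht T2 w \<and> ht T2 w \<le> ht T2 v + 2*\<epsilon>"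
        have inL: "\<bar>ht T2 w - ht T2 v\<bar> / 2 \<in> ?L" using v w by blast
        have eq: "\<bar>ht T2 w - ht T2 v\<bar> / 2 = (ht T2 w - ht T2 v) / 2" using h lam0 by simp
        show False
        proof (rule nogap[OF inL])
          show "lam < \<bar>ht T2 w - ht T2 v\<bar> / 2" using eq h[THEN conjunct1] h[THEN conjunct2] by (simp add: field_simps)
          show "\<bar>ht T2 w - ht T2 v\<bar> / 2 \<le> \<epsilon>" using eq h[THEN conjunct1] h[THEN conjunct2] by (simp add: field_simps)
        qed
      qed
    qed
    then have "lam \<in> E" unfolding E_def by blast
    then have "lam \<in> E \<inter> ?L" using lam(1) by (rule IntI)
    then show ?thesis using lam(2) by (intro bexI[of _ lam]) auto
  qed
  have Ene: "E \<noteq> {}" using big_compat[OF m1 m2] unfolding E_def by blast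
  then obtain e0 where e0: "e0 \<in> E" by blast
  define E' where "E' = E \<inter> ?L"
  have fE1: "finite E'" unfolding E'_def using finL by blast
  have fE2: "E' \<noteq> {}" unfolding E'_def using key[OF e0] by blast
  have fE': "finite E'" "E' \<noteq> {}" using fE1 fE2 by auto
  define m where "m = Min E'"
  have mE': "m \<in> E'" unfolding m_def using fE' by (rule Min_in)
  have bdd: "bdd_below E" unfolding bdd_below_def using E0 by blast
  have "Inf E \<le> m" using mE' unfolding E'_def by (intro cInf_lower[OF _ bdd]) auto
  moreover have "m \<le> Inf E"
  proof (rule cInf_greatest[OF Ene])
    fix \<epsilon> assume eE: "\<epsilon> \<in> E"
    obtain l where l: "l \<in> E \<inter> ?L" "l \<le> \<epsilon>" using key[OF eE] by (elim bexE)
    have "m \<le> l" unfolding m_def by (rule Min_le[OF fE'(1) l(1)[folded E'_def]])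
    then show "m \<le> \<epsilon>" using l by simp
  qed
  ultimately have "Inf E = m" by simp
  moreover have "interleaving_dist T1 T2 = Inf E" unfolding interleaving_dist_def E_def ..
  ultimately show ?thesis using mE' unfolding E'_def by simp
qed


end
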